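(* Let $A\in\mathbb{R}^{n\times m}$, $B\in\mathbb{R}_+^{n\times k}$ and $C\in\mathbb{R}_+^{k\times m}$ be such that $B\boxtimes C$ is dominated by $A$, i.e. $(B\boxtimes C)_{ij}\le A_{ij}$ for all $i\in[n]$, $j\in[m]$. Then $s(B)+s(C)\ge s(A)$.
   Context: $\mathbb{R}_+=[0,\infty)$ and $[n]=\{1,\dots,n\}$. The max-times product is $(B\boxtimes C)_{ij}=\max_{s=1}^{k} B_{is}C_{sj}$. For a $p\times q$ matrix $X$, its sparsity is $s(X)=\frac{pq-\mathrm{nnz}(X)}{pq}$, where $\mathrm{nnz}(X)$ is the number of nonzero entries of $X$. *)

theory Defs
  imports "HOL-Analysis.Analysis"
begin

definition maxtimes :: "real^'k^'p \<Rightarrow> real^'q^'k \<Rightarrow> real^'q^'p" where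
  "maxtimes B C = (\<chi> i j. Max ((\<lambda>s. B $ i $ s * C $ s $ j) ` UNIV))"

definition nnz :: "real^'q^'p \<Rightarrow> nat" where
  "nnz X = card {(i, j). X $ i $ j \<noteq> 0}"

definition sparsity :: "real^'q^'p \<Rightarrow> real" where
  "sparsity X = (real (CARD('p) * CARD('q)) - real (nnz X)) / real (CARD('p) * CARD('q))"

end

theory Submission
  imports Defs
begin

lemma zeros_card:
  fixes X :: "real^'q^'p"
  shows "real (nnz X) = real (CARD('p) * CARD('q)) - real (card {(i, j). X $ i $ j = 0})"
proof -
  have u: "{(i, j). X $ i $ j \<noteq> 0} \<union> {(i, j). X $ i $ j = 0} = (UNIV :: ('p \<times> 'q) set)" by auto
  have "card {(i, j). X $ i $ j \<noteq> 0} + card {(i, j). X $ i $ j = 0} = card (UNIV :: ('p \<times> 'q) set)"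
    unfolding u[symmetric] by (rule card_Un_disjoint[symmetric]) auto
  also have "\<dots> = CARD('p) * CARD('q)" by (simp add: card_cartesian_product UNIV_Times_UNIV[symmetric] del: UNIV_Times_UNIV)
  finally show ?thesis unfolding nnz_def by linarith
qed

lemma sparsity_eq:
  fixes X :: "real^'q^'p"
  shows "sparsity X = real (card {(i, j). X $ i $ j = 0}) / real (CARD('p) * CARD('q))"
  unfolding sparsity_def zeros_card by simp

lemma card_pairs_fst:
  fixes P :: "'a::finite \<Rightarrow> 'b::finite \<Rightarrow> bool"
  shows "card {(i, s). P i s} = (\<Sum>s\<in>UNIV. card {i. P i s})"
proof -
  have e: "{(i, s). P i s} = (\<Union>s. (\<lambda>i. (i, s)) ` {i. P i s})" by auto
  have "card (\<Union>s. (\<lambda>i. (i, s)) ` {i. P i s}) = (\<Sum>s\<in>UNIV. card ((\<lambda>i. (i, s)) ` {i. P i s}))"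
    by (rule card_UN_disjoint) auto
  also have "\<dots> = (\<Sum>s\<in>UNIV. card {i. P i s})"
    by (rule sum.cong) (auto simp: card_image inj_on_def)
  finally show ?thesis using e by simp
qed

lemma card_pairs_snd:
  fixes P :: "'a::finite \<Rightarrow> 'b::finite \<Rightarrow> bool"
  shows "card {(s, j). P s j} = (\<Sum>s\<in>UNIV. card {j. P s j})"
proof -
  have e: "{(s, j). P s j} = (\<Union>s. (\<lambda>j. (s, j)) ` {j. P s j})" by auto
  have "card (\<Union>s. (\<lambda>j. (s, j)) ` {j. P s j}) = (\<Sum>s\<in>UNIV. card ((\<lambda>j. (s, j)) ` {j. P s j}))"
    by (rule card_UN_disjoint) auto
  also have "\<dots> = (\<Sum>s\<in>UNIV. card {j. P s j})"
    by (rule sum.cong) (auto simp: card_image inj_on_def)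
  finally show ?thesis using e by simp
qed

theorem theorem3:
  fixes A :: "real^'m^'n" and B :: "real^'k^'n" and C :: "real^'m^'k"
  assumes B_nonneg: "\<And>i s. B $ i $ s \<ge> 0"
    and C_nonneg: "\<And>s j. C $ s $ j \<ge> 0"
    and dom: "\<And>i j. maxtimes B C $ i $ j \<le> A $ i $ j"
  shows "sparsity B + sparsity C \<ge> sparsity A"
proof -
  define zA where "zA = card {(i, j). A $ i $ j = 0}"
  define zB where "zB = card {(i, s). B $ i $ s = 0}"
  define zC where "zC = card {(s, j). C $ s $ j = 0}"
  define b where "b s = card {i. B $ i $ s = 0}" for s
  define c where "c s = card {j. C $ s $ j = 0}" for s
  have sub: "{(i, j). A $ i $ j = 0} \<subseteq> {i. B $ i $ s = 0} \<times> UNIV \<union> UNIV \<times> {j. C $ s $ j = 0}" for s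
  proof
    fix x assume "x \<in> {(i, j). A $ i $ j = 0}"
    then obtain i j where x: "x = (i, j)" and a: "A $ i $ j = 0" by auto
    have "B $ i $ s * C $ s $ j \<le> Max ((\<lambda>s. B $ i $ s * C $ s $ j) ` UNIV)"
      by (rule Max_ge) auto
    also have "\<dots> \<le> 0" using dom[of i j] a by (simp add: maxtimes_def)
    finally have "B $ i $ s * C $ s $ j \<le> 0" .
    then have "B $ i $ s * C $ s $ j = 0"
      using B_nonneg[of i s] C_nonneg[of s j] by (meson mult_nonneg_nonneg order_antisym)
    then show "x \<in> {i. B $ i $ s = 0} \<times> UNIV \<union> UNIV \<times> {j. C $ s $ j = 0}" using x by auto
  qed
  have le: "zA \<le> b s * CARD('m) + CARD('n) * c s" for s
  proof -
    have "zA \<le> card ({i. B $ i $ s = 0} \<times> (UNIV::'m set) \<union> (UNIV::'n set) \<times> {j. C $ s $ j = 0})"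
      unfolding zA_def by (rule card_mono[OF _ sub]) auto
    also have "\<dots> \<le> card ({i. B $ i $ s = 0} \<times> (UNIV::'m set)) + card ((UNIV::'n set) \<times> {j. C $ s $ j = 0})"
      by (rule card_Un_le)
    also have "\<dots> = b s * CARD('m) + CARD('n) * c s" by (simp add: b_def c_def card_cartesian_product)
    finally show ?thesis .
  qed
  have "CARD('k) * zA = (\<Sum>s\<in>(UNIV::'k set). zA)" by simp
  also have "\<dots> \<le> (\<Sum>s\<in>(UNIV::'k set). b s * CARD('m) + CARD('n) * c s)"
    by (rule sum_mono) (rule le)
  also have "\<dots> = zB * CARD('m) + CARD('n) * zC"
    unfolding zB_def zC_def card_pairs_fst[of "\<lambda>i s. B $ i $ s = 0"] card_pairs_snd[of "\<lambda>s j. C $ s $ j = 0"]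
    by (simp add: sum.distrib sum_distrib_left sum_distrib_right b_def c_def)
  finally have key: "real CARD('k) * real zA \<le> real zB * real CARD('m) + real CARD('n) * real zC"
    by (metis of_nat_add of_nat_le_iff of_nat_mult)
  have pn: "real CARD('n) > 0" and pm: "real CARD('m) > 0" and pk: "real CARD('k) > 0" by auto
  show ?thesis
    unfolding sparsity_eq zA_def[symmetric] zB_def[symmetric] zC_def[symmetric]
    using key pn pm pk by (simp add: field_simps)
qed

end
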